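(* Consider Method 1.1 (described in the context) applied to the problem $\min\{f(x):x\in D\}$. Suppose the method does not terminate, the generated sequence $\{y_i\}_{i\in K}$ is bounded, and the numbers $\varepsilon_k$ are chosen so that $\varepsilon_k>0$ for all $k\in K$ and $\varepsilon_k\to0$ as $k\to\infty$. Then (the sequence $\{x_k\}_{k\in K}$ is defined for all $k$ and) every limit point of $\{x_k\}_{k\in K}$ belongs to $X^*$; and if moreover $f(x_{k+1})\ge f(x_k)$ for all $k\in K$, then $\operatorname{dist}(x_k,X^* )\to0$ as $k\to\infty$.
   Context: Setting: $f_j$, $j\in J=\{1,\dots,m\}$, are convex functions on $\mathbb{R}^n$; $D=\{x:f_j(x)\le0,\ j\in J\}$; $f$ is continuous on $\mathbb{R}^n$ and attains its minimum on $D$; each $D_j=\{x:f_j(x)\le0\}$ has nonempty interior. Notation: $K=\{0,1,2,\dots\}$; $F(x)=\max_{j}f_j(x)$; $D_\varepsilon=\{x:F(x)\le\varepsilon\}$; $f^*=\min_D f$; $X^*=\{x\in D: f(x)=f^*\}$; $E^*=\{x: f(x)\le f^*\}$; $W^1(x,D_j)=\{a\in\mathbb{R}^n:\|a\|=1,\ \langle a,z-x\rangle\le0\ \forall z\in D_j\}$. Method 1.1: Fix $x^*\in X^*$. Choose a closed convex $M_0\subset\mathbb{R}^n$ with $x^*\in M_0$, points $v^j\in\operatorname{int}D_j$ ($j\in J$), a number $\varepsilon_0\ge0$, and a constant $q\in[1,\infty)$; set $k=0$, $i=0$. Step 1: choose $y_i\in M_i\cap E^*$. Step 2: let $J_i=\{j\in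 J: y_i\notin D_j\}$; if $J_i=\emptyset$, stop. Step 3: if $y_i\notin D_{\varepsilon_k}$, choose a closed convex $G_i\subset\mathbb{R}^n$ with $x^*\in G_i$ and set $Q_i=M_i\cap G_i$; otherwise set $i_k=i$, $x_k=y_{i_k}$, choose a closed convex $Q_i$ with $x^*\in Q_i$, choose $\varepsilon_{k+1}\ge0$ and increase $k$ by one. Step 4: for each $j\in J_i$ choose $z_i^j$ in the open segment $(v^j,y_i)$ with $z_i^j\notin\operatorname{int}D_j$ such that for some $q_i^j\in[1,q]$ the point $y_i+q_i^j(z_i^j-y_i)$ lies in $D_j$; for $j\in J\setminus J_i$ set $z_i^j=y_i$. Step 5: choose $H_i\subset J_i$ containing an index $j_i$ with $\|y_i-z_i^{j_i}\|=\max_{j\in J_i}\|y_i-z_i^j\|$. Step 6: for each $j\in H_i$ choose a nonempty finite set $A_i^j\subset W^1(z_i^j,D_j)$, set $M_{i+1}=Q_i\cap\{x:\langle a,x-z_i^j\rangle\le0\ \forall j\in H_i,\ a\in A_i^j\}$, increase $i$ by one and go to Step 1. *)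

theory Defs
  imports "HOL-Analysis.Analysis"
begin

definition Jset :: "nat \<Rightarrow> nat set" where
  "Jset m = {1..m}"

definition Dj :: "(nat \<Rightarrow> 'a \<Rightarrow> real) \<Rightarrow> nat \<Rightarrow> 'a set" where
  "Dj fs j = {x. fs j x \<le> 0}"

definition Dfeas :: "(nat \<Rightarrow> 'a \<Rightarrow> real) \<Rightarrow> nat \<Rightarrow> 'a set" where
  "Dfeas fs m = {x. \<forall>j\<in>Jset m. fs j x \<le> 0}"

definition Fmax :: "(nat \<Rightarrow> 'a \<Rightarrow> real) \<Rightarrow> nat \<Rightarrow> 'a \<Rightarrow> real" where
  "Fmax fs m x = Max ((\<lambda>j. fs j x) ` Jset m)"

definition Deps :: "(nat \<Rightarrow> 'a \<Rightarrow> real) \<Rightarrow> nat \<Rightarrow> real \<Rightarrow> 'a set" where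
  "Deps fs m \<epsilon> = {x. Fmax fs m x \<le> \<epsilon>}"

definition fstar :: "('a \<Rightarrow> real) \<Rightarrow> (nat \<Rightarrow> 'a \<Rightarrow> real) \<Rightarrow> nat \<Rightarrow> real" where
  "fstar f fs m = Inf (f ` Dfeas fs m)"

definition Xstar :: "('a \<Rightarrow> real) \<Rightarrow> (nat \<Rightarrow> 'a \<Rightarrow> real) \<Rightarrow> nat \<Rightarrow> 'a set" where
  "Xstar f fs m = {x \<in> Dfeas fs m. f x = fstar f fs m}"

definition Estar :: "('a \<Rightarrow> real) \<Rightarrow> (nat \<Rightarrow> 'a \<Rightarrow> real) \<Rightarrow> nat \<Rightarrow> 'a set" where
  "Estar f fs m = {x. f x \<le> fstar f fs m}"

definition W1 :: "'a::real_inner \<Rightarrow> 'a set \<Rightarrow> 'a set" where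
  "W1 x S = {a. norm a = 1 \<and> (\<forall>z\<in>S. inner a (z - x) \<le> 0)}"

end

theory Submission
  imports Defs
begin


lemma geo:
  fixes v y z a :: "'a::euclidean_space"
  assumes e: "e > 0" "cball v e \<subseteq> S" and a: "a \<in> W1 z S"
    and zs: "z \<in> open_segment v y" and C: "norm (y - v) \<le> C" "C > 0"
  shows "inner a (y - z) \<ge> (e / C) * norm (y - z)"
proof -
  from zs obtain t where t: "0 < t" "t < 1" "z = (1 - t) *\<^sub>R v + t *\<^sub>R y"
    by (auto simp: in_segment)
  have na: "norm a = 1" and sup: "\<And>u. u \<in> S \<Longrightarrow> inner a (u - z) \<le> 0"
    using a by (auto simp: W1_def)
  have "v + e *\<^sub>R a \<in> S" using e na by (auto simp: dist_norm intro!: subsetD[OF e(2)])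
  hence "inner a (v + e *\<^sub>R a - z) \<le> 0" by (rule sup)
  hence h1: "inner a (v - z) + e \<le> 0"
    using na by (simp add: inner_add_right inner_diff_right power2_norm_eq_inner[symmetric] algebra_simps)
  have zv: "v - z = (-t) *\<^sub>R (y - v)" and yz: "y - z = (1 - t) *\<^sub>R (y - v)"
    using t by (auto simp: algebra_simps)
  have "t * inner a (y - v) \<ge> e" using h1 zv by simp
  note te = this
  have ip: "inner a (y - v) \<ge> 0"
  proof (rule ccontr)
    assume "\<not> inner a (y - v) \<ge> 0"
    then have "t * inner a (y - v) < 0" using t by (simp add: mult_pos_neg)
    then show False using te e by linarith
  qed
  have "t * inner a (y - v) \<le> 1 * inner a (y - v)"
    using mult_right_mono[of t 1 "inner a (y - v)"] t ip by simp
  then have i1: "inner a (y - v) \<ge> e" using te by linarith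
  have "norm (y - z) = (1 - t) * norm (y - v)" using yz t by simp
  also have "\<dots> \<le> (1 - t) * C" using C t by (intro mult_left_mono) auto
  finally have "(e / C) * norm (y - z) \<le> (e / C) * ((1 - t) * C)"
    using e C by (intro mult_left_mono) auto
  also have "\<dots> = (1 - t) * e" using C by simp
  also have "\<dots> \<le> (1 - t) * inner a (y - v)" using i1 t by (intro mult_left_mono) auto
  also have "\<dots> = inner a (y - z)" using yz by simp
  finally show ?thesis .
qed

lemma close_pair:
  fixes s :: "nat \<Rightarrow> 'a::euclidean_space"
  assumes "bounded (range s)" "d > 0"
  shows "\<exists>l i. l < i \<and> dist (s l) (s i) < d"
proof -
  obtain p r where r: "strict_mono r" "(s \<circ> r) \<longlonglongrightarrow> p"
    using bounded_imp_convergent_subsequence[OF assms(1)] by blast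
  have "Cauchy (s \<circ> r)" using r(2) by (rule LIMSEQ_imp_Cauchy)
  then obtain M where M: "\<And>m n. m \<ge> M \<Longrightarrow> n \<ge> M \<Longrightarrow> dist ((s \<circ> r) m) ((s \<circ> r) n) < d"
    using assms(2) unfolding Cauchy_def by blast
  have "r M < r (Suc M)" using r(1) by (simp add: strict_mono_def)
  moreover have "dist (s (r M)) (s (r (Suc M))) < d" using M[of M "Suc M"] by simp
  ultimately show ?thesis by blast
qed

lemma unif_fin:
  fixes g :: "nat \<Rightarrow> 'a::metric_space \<Rightarrow> real"
  assumes "finite J" "\<And>j. j \<in> J \<Longrightarrow> uniformly_continuous_on T (g j)" "e > 0"
  shows "\<exists>d>0. \<forall>j\<in>J. \<forall>u\<in>T. \<forall>w\<in>T. dist u w < d \<longrightarrow> dist (g j u) (g j w) < e"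
  using assms(1,2)
proof (induction J rule: finite_induct)
  case empty then show ?case by (auto intro: exI[of _ 1])
next
  case (insert j J)
  then obtain d where d: "d > 0" "\<forall>j\<in>J. \<forall>u\<in>T. \<forall>w\<in>T. dist u w < d \<longrightarrow> dist (g j u) (g j w) < e"
    by blast
  obtain d' where d': "d' > 0" "\<forall>u\<in>T. \<forall>w\<in>T. dist u w < d' \<longrightarrow> dist (g j u) (g j w) < e"
    using insert.prems[of j] assms(3) unfolding uniformly_continuous_on_def by (metis insertI1)
  show ?case using d d' by (intro exI[of _ "min d d'"]) auto
qed

lemma hit:
  fixes kk :: "nat \<Rightarrow> nat"
  assumes "kk 0 = 0" "\<And>i. kk (Suc i) \<le> Suc (kk i)" "k < kk i"
  shows "\<exists>i'. kk i' = k \<and> kk (Suc i') = Suc k"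
  using assms(3)
proof (induction i)
  case 0 then show ?case using assms(1) by simp
next
  case (Suc i)
  show ?case
  proof (cases "k < kk i")
    case True then show ?thesis using Suc.IH by blast
  next
    case False
    then have "kk i = k" using Suc.prems assms(2)[of i] by linarith
    then show ?thesis using Suc.prems assms(2)[of i] by (intro exI[of _ i]) auto
  qed
qed


theorem theorem1p1p2:
  fixes fs :: "nat \<Rightarrow> 'a::euclidean_space \<Rightarrow> real"
    and m :: nat
    and f :: "'a \<Rightarrow> real"
    \<comment> \<open>data of one (non-terminating) run of Method 1.1\<close>
    and xstar :: 'a and v :: "nat \<Rightarrow> 'a" and q :: real
    and eps :: "nat \<Rightarrow> real"
    and M G Q :: "nat \<Rightarrow> 'a set"
    and y :: "nat \<Rightarrow> 'a"
    and kk :: "nat \<Rightarrow> nat"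
    and x :: "nat \<Rightarrow> 'a"
    and z :: "nat \<Rightarrow> nat \<Rightarrow> 'a" and qq :: "nat \<Rightarrow> nat \<Rightarrow> real"
    and H :: "nat \<Rightarrow> nat set" and jsel :: "nat \<Rightarrow> nat"
    and A :: "nat \<Rightarrow> nat \<Rightarrow> 'a set"
  \<comment> \<open>standing assumptions\<close>
  assumes m_pos: "m \<ge> 1"
    and conv: "\<And>j. j \<in> Jset m \<Longrightarrow> convex_on UNIV (fs j)"
    and fcont: "continuous_on UNIV f"
    and fmin: "\<exists>x0\<in>Dfeas fs m. \<forall>x\<in>Dfeas fs m. f x0 \<le> f x"
    and intD: "\<And>j. j \<in> Jset m \<Longrightarrow> interior (Dj fs j) \<noteq> {}"
  \<comment> \<open>initialisation\<close>
    and xstar: "xstar \<in> Xstar f fs m"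
    and M0: "closed (M 0)" "convex (M 0)" "xstar \<in> M 0"
    and v: "\<And>j. j \<in> Jset m \<Longrightarrow> v j \<in> interior (Dj fs j)"
    and q: "q \<ge> 1"
    and kk0: "kk 0 = 0"
  \<comment> \<open>Step 1\<close>
    and step1: "\<And>i. y i \<in> M i \<inter> Estar f fs m"
  \<comment> \<open>Step 2: the method does not terminate\<close>
    and step2: "\<And>i. {j \<in> Jset m. y i \<notin> Dj fs j} \<noteq> {}"
  \<comment> \<open>Step 3\<close>
    and step3a: "\<And>i. y i \<notin> Deps fs m (eps (kk i)) \<Longrightarrow>
        closed (G i) \<and> convex (G i) \<and> xstar \<in> G i \<and> Q i = M i \<inter> G i \<and> kk (Suc i) = kk i"
    and step3b: "\<And>i. y i \<in> Deps fs m (eps (kk i)) \<Longrightarrow>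
        x (kk i) = y i \<and> closed (Q i) \<and> convex (Q i) \<and> xstar \<in> Q i \<and> kk (Suc i) = Suc (kk i)"
  \<comment> \<open>Step 4\<close>
    and step4a: "\<And>i j. j \<in> Jset m \<Longrightarrow> y i \<notin> Dj fs j \<Longrightarrow>
        z i j \<in> open_segment (v j) (y i) \<and> z i j \<notin> interior (Dj fs j) \<and>
        1 \<le> qq i j \<and> qq i j \<le> q \<and> y i + qq i j *\<^sub>R (z i j - y i) \<in> Dj fs j"
    and step4b: "\<And>i j. j \<in> Jset m \<Longrightarrow> y i \<in> Dj fs j \<Longrightarrow> z i j = y i"
  \<comment> \<open>Step 5\<close>
    and step5: "\<And>i. H i \<subseteq> {j \<in> Jset m. y i \<notin> Dj fs j} \<and> jsel i \<in> H i \<and>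
        (\<forall>j \<in> {j \<in> Jset m. y i \<notin> Dj fs j}. norm (y i - z i j) \<le> norm (y i - z i (jsel i)))"
  \<comment> \<open>Step 6\<close>
    and step6: "\<And>i j. j \<in> H i \<Longrightarrow> finite (A i j) \<and> A i j \<noteq> {} \<and> A i j \<subseteq> W1 (z i j) (Dj fs j)"
    and Msuc: "\<And>i. M (Suc i) = Q i \<inter> {p. \<forall>j\<in>H i. \<forall>a\<in>A i j. inner a (p - z i j) \<le> 0}"
  \<comment> \<open>hypotheses of the theorem\<close>
    and ybdd: "bounded (range y)"
    and eps_pos: "\<And>k. eps k > 0"
    and eps_lim: "eps \<longlonglongrightarrow> 0"
  shows "(\<forall>k. \<exists>i. k < kk i)
      \<and> (\<forall>p. (\<exists>r. strict_mono r \<and> (x \<circ> r) \<longlonglongrightarrow> p) \<longrightarrow> p \<in> Xstar f fs m)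
      \<and> ((\<forall>k. f (x (Suc k)) \<ge> f (x k)) \<longrightarrow> (\<lambda>k. infdist (x k) (Xstar f fs m)) \<longlonglongrightarrow> 0)"
  proof -
  let ?J = "Jset m"
  have Jfin: "finite ?J" by (simp add: Jset_def)
  have Jne: "?J \<noteq> {}" using m_pos by (auto simp: Jset_def)
  have cont: "\<And>j. j \<in> ?J \<Longrightarrow> continuous_on UNIV (fs j)"
    using conv by (intro convex_on_continuous) auto
  have Fge: "\<And>j u. j \<in> ?J \<Longrightarrow> fs j u \<le> Fmax fs m u"
    unfolding Fmax_def using Jfin by (intro Max_ge) auto
  have kkstep: "kk (Suc i) = kk i \<or> kk (Suc i) = Suc (kk i)" for i
    using step3a[of i] step3b[of i] by blast
  have kkle: "kk (Suc i) \<le> Suc (kk i)" for i using kkstep[of i] by auto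
  have kkmono: "incseq kk"
    using kkstep by (intro incseq_SucI) (metis le_SucI order_refl)
  have P1: "\<forall>k. \<exists>i. k < kk i"
  proof (rule ccontr)
    assume "\<not> (\<forall>k. \<exists>i. k < kk i)"
    then have "\<exists>k0. \<forall>i. kk i \<le> k0" by (simp add: not_less)
    then obtain k0 where k0: "\<And>i. kk i \<le> k0" by blast
    have fin: "finite (range kk)" by (rule finite_subset[of _ "{..k0}"]) (use k0 in auto)
    obtain N where N: "kk N = Max (range kk)"
      using Max_in[OF fin] by auto
    define K where "K = kk N"
    have kkK: "kk i = K" if "i \<ge> N" for i
    proof -
      have "kk N \<le> kk i" using kkmono that by (simp add: incseq_def)
      moreover have "kk i \<le> Max (range kk)" using \<open>finite (range kk)\<close> by simp
      ultimately show ?thesis using N K_def by simp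
    qed
    have notD: "y i \<notin> Deps fs m (eps K)" if "i \<ge> N" for i
    proof
      assume "y i \<in> Deps fs m (eps K)"
      then have "kk (Suc i) = Suc (kk i)" using step3b[of i] kkK[OF that] by simp
      then show False using kkK[OF that] kkK[of "Suc i"] that by simp
    qed
    have Mdec: "M (Suc i) \<subseteq> M i" if "i \<ge> N" for i
      using step3a[OF notD[OF that, folded kkK[OF that]]] Msuc[of i] by auto
    have Mdec2: "M (Suc l + n) \<subseteq> M (Suc l)" if "l \<ge> N" for l n
    proof (induction n)
      case 0 then show ?case by simp
    next
      case (Suc n) then show ?case using Mdec[of "Suc l + n"] that by auto
    qed
    obtain B where B: "\<And>i. norm (y i) \<le> B" using ybdd by (auto simp: bounded_iff)
    obtain V where V: "\<And>j. j \<in> ?J \<Longrightarrow> norm (v j) \<le> V"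
      using finite_imp_bounded[OF finite_imageI[OF Jfin, of v]] by (auto simp: bounded_iff)
    define C where "C = B + V + 1"
    obtain j0 where j0: "j0 \<in> ?J" using Jne by blast
    have B0: "0 \<le> B" using B[of 0] norm_ge_zero[of "y 0"] by linarith
    have V0: "0 \<le> V" using V[OF j0] norm_ge_zero[of "v j0"] by linarith
    have C: "C > 0" using B0 V0 by (simp add: C_def)
    have yvC: "norm (y i - v j) \<le> C" if "j \<in> ?J" for i j
      using B[of i] V[OF that] norm_triangle_ineq4[of "y i" "v j"] C_def by linarith
    have "\<forall>j\<in>?J. \<exists>e>0. cball (v j) e \<subseteq> Dj fs j" using v by (simp add: mem_interior_cball)
    then obtain ef where ef: "\<And>j. j \<in> ?J \<Longrightarrow> ef j > 0 \<and> cball (v j) (ef j) \<subseteq> Dj fs j"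
      by metis
    define e0 where "e0 = Min (ef ` ?J)"
    have e0: "e0 > 0" using ef Jfin Jne by (simp add: e0_def)
    have e0c: "cball (v j) e0 \<subseteq> Dj fs j" if "j \<in> ?J" for j
    proof -
      have "e0 \<le> ef j" using Jfin that by (simp add: e0_def)
      then show ?thesis using ef[OF that] by auto
    qed
    define c where "c = e0 / C"
    have c: "c > 0" using e0 C by (simp add: c_def)
    have key: "c * norm (y l - z l (jsel l)) \<le> dist (y l) (y i)" if "N \<le> l" "l < i" for l i
    proof -
      let ?j = "jsel l"
      have j: "?j \<in> ?J" "y l \<notin> Dj fs ?j" using step5[of l] by auto
      obtain a where a: "a \<in> A l ?j" using step6[of ?j l] step5[of l] by auto
      have aW: "a \<in> W1 (z l ?j) (Dj fs ?j)" using step6[of ?j l] step5[of l] a by auto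
      have g: "inner a (y l - z l ?j) \<ge> c * norm (y l - z l ?j)"
        unfolding c_def
        by (rule geo[OF e0 e0c[OF j(1)] aW _ yvC[OF j(1)] C]) (use step4a[OF j] in blast)
      have "y i \<in> M (Suc l)"
        using step1[of i] Mdec2[OF that(1), of "i - Suc l"] that by auto
      then have "inner a (y i - z l ?j) \<le> 0"
        using Msuc[of l] a step5[of l] by auto
      then have "c * norm (y l - z l ?j) \<le> inner a (y l - y i)"
        using g by (simp add: inner_diff_right)
      also have "\<dots> \<le> norm a * norm (y l - y i)" by (rule norm_cauchy_schwarz)
      also have "\<dots> = dist (y l) (y i)" using aW by (simp add: W1_def dist_norm)
      finally show ?thesis .
    qed
    define R where "R = B + q"
    have uc: "\<And>j. j \<in> ?J \<Longrightarrow> uniformly_continuous_on (cball 0 R) (fs j)"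
      using cont by (intro compact_uniformly_continuous) (auto intro: continuous_on_subset)
    obtain d where d: "d > 0" "\<And>j u w. j \<in> ?J \<Longrightarrow> u \<in> cball 0 R \<Longrightarrow> w \<in> cball 0 R \<Longrightarrow>
        dist u w < d \<Longrightarrow> dist (fs j u) (fs j w) < eps K"
    proof -
      have "\<exists>d>0. \<forall>j\<in>?J. \<forall>u\<in>cball 0 R. \<forall>w\<in>cball 0 R. dist u w < d \<longrightarrow> dist (fs j u) (fs j w) < eps K"
        by (rule unif_fin[OF Jfin]) (use uc eps_pos in auto)
      then show ?thesis using that by blast
    qed
    define \<delta> where "\<delta> = min 1 (d / q)"
    have \<delta>12: "\<delta> > 0" "\<delta> \<le> 1" using d q by (auto simp: \<delta>_def)
    have "q * \<delta> \<le> q * (d / q)" using q by (intro mult_left_mono) (auto simp: \<delta>_def)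
    then have "q * \<delta> \<le> d" using q by simp
    note \<delta> = \<delta>12 this
    have "bounded (range (\<lambda>n. y (N + n)))" using ybdd by (rule bounded_subset) auto
    then obtain l i where li: "l < i" "dist (y (N + l)) (y (N + i)) < c * \<delta>"
      using close_pair[of "\<lambda>n. y (N + n)" "c * \<delta>"] c \<delta> by auto
    define l' where "l' = N + l"
    have small: "norm (y l' - z l' (jsel l')) < \<delta>"
    proof -
      have "c * norm (y l' - z l' (jsel l')) < c * \<delta>"
        using key[of l' "N + i"] li unfolding l'_def by simp
      then show ?thesis using c by simp
    qed
    have "\<not> Fmax fs m (y l') \<le> eps K" using notD[of l'] by (simp add: Deps_def l'_def)
    then obtain j where j: "j \<in> ?J" "fs j (y l') > eps K"
      using Jfin Jne unfolding Fmax_def by (auto simp: Max_le_iff not_le)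
    have yj: "y l' \<notin> Dj fs j" using j eps_pos[of K] by (auto simp: Dj_def)
    have "norm (y l' - z l' j) \<le> norm (y l' - z l' (jsel l'))" using step5[of l'] j yj by auto
    with small have sj: "norm (y l' - z l' j) < \<delta>" by simp
    define w where "w = y l' + qq l' j *\<^sub>R (z l' j - y l')"
    have s4: "1 \<le> qq l' j" "qq l' j \<le> q" "w \<in> Dj fs j" using step4a[OF j(1) yj] w_def by auto
    have wy: "norm (w - y l') \<le> q * \<delta>"
    proof -
      have "norm (w - y l') = qq l' j * norm (z l' j - y l')" using s4 by (simp add: w_def)
      also have "\<dots> \<le> q * \<delta>" using s4 sj by (intro mult_mono) (auto simp: norm_minus_commute)
      finally show ?thesis .
    qed
    have wy2: "norm (w - y l') < d"
    proof -
      have "norm (w - y l') = qq l' j * norm (z l' j - y l')" using s4 by (simp add: w_def)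
      also have "\<dots> < qq l' j * \<delta>" using s4 sj by (intro mult_strict_left_mono) (auto simp: norm_minus_commute)
      also have "\<dots> \<le> q * \<delta>" using s4 \<delta> by (intro mult_right_mono) auto
      finally show ?thesis using \<delta> by simp
    qed
    have yR: "y l' \<in> cball 0 R" using B[of l'] q by (simp add: R_def)
    have wR: "w \<in> cball 0 R"
    proof -
      have "norm w \<le> norm (y l') + norm (w - y l')" by (metis add.commute diff_add_cancel norm_triangle_ineq)
      moreover have "q * \<delta> \<le> q * 1" using \<delta> q by (intro mult_left_mono) auto
      ultimately show ?thesis using B[of l'] wy unfolding R_def by simp
    qed
    have "dist (fs j (y l')) (fs j w) < eps K"
      using d(2)[OF j(1) yR wR] wy2 by (simp add: dist_norm norm_minus_commute)
    moreover have "fs j w \<le> 0" using s4 by (simp add: Dj_def)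
    ultimately show False using j(2) by (simp add: dist_real_def)
  qed
  have xk: "\<exists>i. x k = y i \<and> y i \<in> Deps fs m (eps k)" for k
  proof -
    obtain i where "k < kk i" using P1 by blast
    then obtain i' where i': "kk i' = k" "kk (Suc i') = Suc k" using hit[OF kk0 kkle] by blast
    then have "y i' \<in> Deps fs m (eps (kk i'))" using step3a[of i'] by auto
    then show ?thesis using step3b[of i'] i' by auto
  qed
  have xD: "fs j (x k) \<le> eps k" if "j \<in> ?J" for j k
  proof -
    obtain i where "x k = y i" "y i \<in> Deps fs m (eps k)" using xk by blast
    then show ?thesis using Fge[OF that, of "y i"] by (simp add: Deps_def)
  qed
  have xE: "f (x k) \<le> fstar f fs m" for k
  proof -
    obtain i where "x k = y i" using xk by blast
    then show ?thesis using step1[of i] by (simp add: Estar_def)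
  qed
  have xbdd: "bounded (range x)"
    using ybdd by (rule bounded_subset) (use xk in blast)
  have bddb: "bdd_below (f ` Dfeas fs m)" using fmin by (auto simp: bdd_below_def)
  have P2: "p \<in> Xstar f fs m" if r: "strict_mono r" "(x \<circ> r) \<longlonglongrightarrow> p" for r p
  proof -
    have xr: "(\<lambda>n. x (r n)) \<longlonglongrightarrow> p" using r(2) by (simp add: o_def)
    have er: "(\<lambda>n. eps (r n)) \<longlonglongrightarrow> 0" using LIMSEQ_subseq_LIMSEQ[OF eps_lim r(1)] by (simp add: o_def)
    have pD: "p \<in> Dfeas fs m"
    proof -
      have "fs j p \<le> 0" if j: "j \<in> ?J" for j
      proof -
        have "isCont (fs j) p" using cont[OF j] by (simp add: continuous_on_eq_continuous_at)
        then have "(\<lambda>n. fs j (x (r n))) \<longlonglongrightarrow> fs j p" using xr by (rule isCont_tendsto_compose)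
        then show ?thesis using er xD[OF j] by (intro LIMSEQ_le) auto
      qed
      then show ?thesis by (simp add: Dfeas_def)
    qed
    have "isCont f p" using fcont by (simp add: continuous_on_eq_continuous_at)
    then have "(\<lambda>n. f (x (r n))) \<longlonglongrightarrow> f p" using xr by (rule isCont_tendsto_compose)
    then have "f p \<le> fstar f fs m" using xE by (intro LIMSEQ_le_const2) auto
    moreover have "fstar f fs m \<le> f p" unfolding fstar_def using pD bddb by (intro cInf_lower) auto
    ultimately show ?thesis using pD by (simp add: Xstar_def)
  qed
  have P3: "(\<lambda>k. infdist (x k) (Xstar f fs m)) \<longlonglongrightarrow> 0"
  proof (rule ccontr)
    let ?g = "\<lambda>k. infdist (x k) (Xstar f fs m)"
    assume "\<not> ?g \<longlonglongrightarrow> 0"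
    then have "\<exists>e>0. \<not> (\<forall>\<^sub>F k in sequentially. dist (?g k) 0 < e)"
      unfolding tendsto_iff by blast
    then obtain e where e: "e > 0" "\<not> (\<forall>\<^sub>F k in sequentially. dist (?g k) 0 < e)"
      by blast
    define S where "S = {k. \<not> dist (?g k) 0 < e}"
    have Sinf: "infinite S"
    proof -
      have "\<not> (\<forall>\<^sub>F k in cofinite. dist (?g k) 0 < e)" using e(2) by (simp add: cofinite_eq_sequentially)
      then show ?thesis unfolding S_def eventually_cofinite by simp
    qed
    define r1 where "r1 = enumerate S"
    have r1: "strict_mono r1" unfolding r1_def by (rule strict_mono_enumerate[OF Sinf])
    have r1S: "e \<le> ?g (r1 n)" for n
      using enumerate_in_set[OF Sinf, of n] unfolding S_def r1_def
      by (simp add: not_less abs_of_nonneg[OF infdist_nonneg])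
    have "bounded (range (x \<circ> r1))" using xbdd by (rule bounded_subset) auto
    then obtain p r2 where r2: "strict_mono r2" "((x \<circ> r1) \<circ> r2) \<longlonglongrightarrow> p"
      using bounded_imp_convergent_subsequence by blast
    have "p \<in> Xstar f fs m"
      using P2[of "r1 \<circ> r2" p] strict_mono_o[OF r1 r2(1)] r2(2) by (simp add: o_assoc)
    moreover have "(\<lambda>n. infdist (((x \<circ> r1) \<circ> r2) n) (Xstar f fs m)) \<longlonglongrightarrow> infdist p (Xstar f fs m)"
      using r2(2) by (rule tendsto_infdist)
    ultimately have "(\<lambda>n. ?g (r1 (r2 n))) \<longlonglongrightarrow> 0" by simp
    then have "e \<le> 0" using r1S by (intro LIMSEQ_le_const) auto
    then show False using e by simp
  qed
  show ?thesis using P1 P2 P3 by blast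
qed

end
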